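(* Let $\pi\in[n]^m$ be a picking sequence for chores and let $i\ne j$ be two pickers. If in every suffix of $\pi$ picker $j$ has at least as many rounds as picker $i$, then a risk averse picker $i$ with any additive disvaluation $c_i$ does not envy picker $j$, not even ex-post: for any disvaluations and strategies of the other agents, when $i$ picks greedily, $c_i(B_i)\le c_i(B_j)$. Conversely, if this suffix condition fails, then there is an additive disvaluation $c_i$ for picker $i$ under which $i$ envies $j$, i.e. $\sum_{r\in R_i}c_i(e_{m-r+1})>\sum_{r\in R_j}c_i(e_{m-r+1})$, where $R_i,R_j$ are the rounds of $i$ and $j$ in $\pi$ and the chores are ordered so that $c_i(e_1)\ge\cdots\ge c_i(e_m)$.
   Context: In round $r$ of the picking sequence, picker $\pi_r$ takes one remaining chore. A risk averse agent uses the greedy picking strategy (take a remaining chore of smallest own disvalue); the disvalue such an agent can guarantee from a set $R$ of rounds is $\sum_{r\in R}c_i(e_{m-r+1})$ with chores sorted by non-increasing $c_i$. $B_i,B_j$ denote the final bundles of $i$ and $j$. *)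

theory Defs
  imports Complex_Main
begin

text \<open>A picking sequence is a list of agents (natural numbers < n) of length m.
Rounds are 0-based list positions here (paper round r corresponds to index r-1).
Chores are the natural numbers 0..<m.\<close>

definition suffix_cond :: "nat list \<Rightarrow> nat \<Rightarrow> nat \<Rightarrow> bool" where
  "suffix_cond \<pi> i j \<longleftrightarrow>
     (\<forall>k \<le> length \<pi>. count_list (drop k \<pi>) i \<le> count_list (drop k \<pi>) j)"

text \<open>A complete run of the picking sequence: ps!r is the chore taken in round r.
Agent i picks greedily (a remaining chore of smallest disvalue c); all other agents'
picks are arbitrary (this covers every disvaluation and strategy of the other agents).\<close>
definition greedy_run :: "nat list \<Rightarrow> nat \<Rightarrow> (nat \<Rightarrow> real) \<Rightarrow> nat list \<Rightarrow> bool" where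
  "greedy_run \<pi> i c ps \<longleftrightarrow>
     length ps = length \<pi> \<and> distinct ps \<and> set ps = {0..<length \<pi>} \<and>
     (\<forall>r < length \<pi>. \<pi> ! r = i \<longrightarrow>
        (\<forall>x \<in> {0..<length \<pi>} - set (take r ps). c (ps ! r) \<le> c x))"

definition final_bundle :: "nat list \<Rightarrow> nat list \<Rightarrow> nat \<Rightarrow> nat set" where
  "final_bundle \<pi> ps a = {ps ! r | r. r < length \<pi> \<and> \<pi> ! r = a}"

definition sorted_enum :: "(nat \<Rightarrow> real) \<Rightarrow> nat \<Rightarrow> (nat \<Rightarrow> nat) \<Rightarrow> bool" where
  "sorted_enum c m e \<longleftrightarrow> bij_betw e {1..m} {0..<m} \<and>
     (\<forall>a b. 1 \<le> a \<longrightarrow> a \<le> b \<longrightarrow> b \<le> m \<longrightarrow> c (e b) \<le> c (e a))"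

definition guarantee :: "nat list \<Rightarrow> (nat \<Rightarrow> real) \<Rightarrow> (nat \<Rightarrow> nat) \<Rightarrow> nat \<Rightarrow> real" where
  "guarantee \<pi> c e a = (\<Sum>r \<in> {r \<in> {1..length \<pi>}. \<pi> ! (r - 1) = a}. c (e (length \<pi> - r + 1)))"

end

theory Submission
  imports Defs
begin

definition W :: "nat \<Rightarrow> nat list \<Rightarrow> (nat \<Rightarrow> real) \<Rightarrow> real" where
  "W a xs m = sum m {r. r < length xs \<and> xs ! r = a}"

lemma card_rounds: "card {r. r < length xs \<and> xs ! r = a} = count_list xs a"
  by (simp add: count_list_eq_length_filter length_filter_conv_card eq_commute)

lemma rounds_Cons: "{r. r < length (x#xs) \<and> (x#xs) ! r = a} =
   (if x = a then {0} else {}) \<union> Suc ` {r. r < length xs \<and> xs ! r = a}"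
proof (intro set_eqI iffI)
  fix r assume "r \<in> {r. r < length (x#xs) \<and> (x#xs) ! r = a}"
  then show "r \<in> (if x = a then {0} else {}) \<union> Suc ` {r. r < length xs \<and> xs ! r = a}"
    by (cases r) auto
next
  fix r assume "r \<in> (if x = a then {0} else {}) \<union> Suc ` {r. r < length xs \<and> xs ! r = a}"
  then show "r \<in> {r. r < length (x#xs) \<and> (x#xs) ! r = a}"
    by (cases "x = a") auto
qed

lemma W_Cons: "W a (x#xs) m = (if x = a then m 0 else 0) + W a xs (m \<circ> Suc)"
proof -
  have fin: "finite (Suc ` {r. r < length xs \<and> xs ! r = a})" by simp
  show ?thesis unfolding W_def rounds_Cons
    by (auto simp: sum.reindex sum.union_disjoint)
qed

lemma W_shift: "W a xs m = m 0 * count_list xs a + W a xs (\<lambda>r. m r - m 0)"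
  unfolding W_def by (simp add: sum_subtractf card_rounds[symmetric])

lemma W_mono_lemma:
  "suffix_cond xs i j \<Longrightarrow> \<forall>r<length xs. 0 \<le> m r \<Longrightarrow>
   (\<forall>r r'. r \<le> r' \<longrightarrow> r' < length xs \<longrightarrow> m r \<le> m r') \<Longrightarrow> W i xs m \<le> W j xs m"
proof (induction xs arbitrary: m)
  case Nil
  then show ?case by (simp add: W_def)
next
  case (Cons x xs)
  define g where "g = (\<lambda>r. m r - m 0)"
  have sc: "suffix_cond xs i j" using Cons.prems(1) unfolding suffix_cond_def
    by (metis Suc_le_mono drop_Suc_Cons length_Cons)
  have c0: "count_list (x#xs) i \<le> count_list (x#xs) j" using Cons.prems(1) unfolding suffix_cond_def
    by (metis drop0 le0)
  have m0: "0 \<le> m 0" using Cons.prems(2) by simp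
  have IH: "W i xs (g \<circ> Suc) \<le> W j xs (g \<circ> Suc)"
    apply (rule Cons.IH[OF sc])
    using Cons.prems(3) by (auto simp: g_def)
  have "W a (x#xs) m = m 0 * count_list (x#xs) a + W a xs (g \<circ> Suc)" for a
    using W_shift[of a "x#xs" m] W_Cons[of a x xs g] by (simp add: g_def)
  moreover have "m 0 * count_list (x#xs) i \<le> m 0 * count_list (x#xs) j"
    using c0 m0 by (simp add: mult_left_mono)
  ultimately show ?case using IH by simp
qed

lemma part1:
  assumes sc: "suffix_cond \<pi> i j" and c0: "\<forall>x. 0 \<le> c x" and gr: "greedy_run \<pi> i c ps"
  shows "sum c (final_bundle \<pi> ps i) \<le> sum c (final_bundle \<pi> ps j)"
proof -
  define L where "L = length \<pi>"
  have len: "length ps = L" and dist: "distinct ps" and sps: "set ps = {0..<L}"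
    and greedy: "\<And>r x. r < L \<Longrightarrow> \<pi> ! r = i \<Longrightarrow> x \<in> {0..<L} - set (take r ps) \<Longrightarrow> c (ps ! r) \<le> c x"
    using gr unfolding greedy_run_def L_def by auto
  define a where "a = (\<lambda>r. c (ps ! r))"
  define m where "m = (\<lambda>r. Min (a ` {r..<L}))"
  have fb: "sum c (final_bundle \<pi> ps x) = W x \<pi> a" for x
  proof -
    have "final_bundle \<pi> ps x = (nth ps) ` {r. r < length \<pi> \<and> \<pi> ! r = x}"
      unfolding final_bundle_def by auto
    moreover have "inj_on (nth ps) {r. r < length \<pi> \<and> \<pi> ! r = x}"
      by (rule inj_on_nth) (use dist len L_def in auto)
    ultimately show ?thesis unfolding W_def a_def by (simp add: sum.reindex)
  qed
  have notin: "ps ! s \<notin> set (take r ps)" if "r \<le> s" "s < L" for r s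
  proof
    assume "ps ! s \<in> set (take r ps)"
    then obtain t where t: "t < length (take r ps)" "take r ps ! t = ps ! s"
      by (auto simp: in_set_conv_nth)
    then have "ps ! t = ps ! s" "t < r" "t < L" using len by auto
    then show False using dist that len nth_eq_iff_index_eq by fastforce
  qed
  have s1: "W i \<pi> a \<le> W i \<pi> m"
    unfolding W_def
  proof (rule sum_mono)
    fix r assume r: "r \<in> {r. r < length \<pi> \<and> \<pi> ! r = i}"
    show "a r \<le> m r" unfolding m_def
    proof (subst Min_ge_iff)
      show "\<forall>x\<in>a ` {r..<L}. a r \<le> x"
      proof
        fix x assume "x \<in> a ` {r..<L}"
        then obtain s where s: "r \<le> s" "s < L" "x = a s" by auto
        have "ps ! s \<in> {0..<L}" using s len sps nth_mem by (metis)
        then show "a r \<le> x" using greedy[of r "ps ! s"] r notin[OF s(1,2)] s(3)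
          unfolding a_def L_def by auto
      qed
    qed (use r L_def in auto)
  qed
  have s2: "W i \<pi> m \<le> W j \<pi> m"
  proof (rule W_mono_lemma[OF sc])
    show "\<forall>r<length \<pi>. 0 \<le> m r" unfolding m_def a_def L_def
      using c0 by (auto simp: Min_ge_iff)
    show "\<forall>r r'. r \<le> r' \<longrightarrow> r' < length \<pi> \<longrightarrow> m r \<le> m r'" unfolding m_def L_def
      by (auto intro!: Min_antimono)
  qed
  have s3: "W j \<pi> m \<le> W j \<pi> a"
    unfolding W_def by (rule sum_mono) (auto simp: m_def L_def)
  show ?thesis using s1 s2 s3 fb by simp
qed

lemma prefix_claim:
  fixes e :: "nat \<Rightarrow> nat"
  assumes se: "sorted_enum (\<lambda>x. if x < p then 1 else 0 :: real) L e" and pL: "p \<le> L"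
    and b: "1 \<le> b" "b \<le> L"
  shows "e b < p \<longleftrightarrow> b \<le> p"
proof -
  define c where "c = (\<lambda>x. if x < p then 1 else 0 :: real)"
  have bij: "bij_betw e {1..L} {0..<L}" and srt: "\<And>a b. 1 \<le> a \<Longrightarrow> a \<le> b \<Longrightarrow> b \<le> L \<Longrightarrow> c (e b) \<le> c (e a)"
    using se unfolding sorted_enum_def c_def by auto
  have inj: "inj_on e {1..L}" using bij bij_betw_def by blast
  show ?thesis
  proof
    assume eb: "e b < p"
    show "b \<le> p"
    proof (rule ccontr)
      assume "\<not> b \<le> p"
      have sub: "e ` {1..b} \<subseteq> {0..<p}"
      proof
        fix y assume "y \<in> e ` {1..b}"
        then obtain b' where "1 \<le> b'" "b' \<le> b" "y = e b'" by auto
        then have "c (e b) \<le> c (e b')" using srt b by auto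
        then show "y \<in> {0..<p}" using eb \<open>y = e b'\<close> by (auto simp: c_def split: if_splits)
      qed
      have "inj_on e {1..b}" using inj b by (auto intro: inj_on_subset)
      then have "card (e ` {1..b}) = b" by (simp add: card_image)
      moreover have "card (e ` {1..b}) \<le> p" using card_mono[OF _ sub] by simp
      ultimately show False using \<open>\<not> b \<le> p\<close> by simp
    qed
  next
    assume bp: "b \<le> p"
    show "e b < p"
    proof (rule ccontr)
      assume nb: "\<not> e b < p"
      have sub: "{0..<p} \<subseteq> e ` {1..<b}"
      proof
        fix y assume y: "y \<in> {0..<p}"
        then have "y \<in> {0..<L}" using pL by auto
        then obtain b' where b': "b' \<in> {1..L}" "e b' = y" using bij
          by (metis bij_betw_imp_surj_on imageE)
        have "b' < b"
        proof (rule ccontr)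
          assume "\<not> b' < b"
          then have "c (e b') \<le> c (e b)" using srt b b' by auto
          then show False using nb y b' by (auto simp: c_def split: if_splits)
        qed
        then show "y \<in> e ` {1..<b}" using b' by auto
      qed
      have "p \<le> card (e ` {1..<b})" using card_mono[OF _ sub] by simp
      also have "\<dots> \<le> card {1..<b}" by (rule card_image_le) simp
      finally show False using bp b by simp
    qed
  qed
qed

lemma part2:
  assumes nsc: "\<not> suffix_cond \<pi> i j"
  shows "\<exists>c :: nat \<Rightarrow> real. (\<forall>x. 0 \<le> c x) \<and>
               (\<forall>e. sorted_enum c (length \<pi>) e \<longrightarrow> guarantee \<pi> c e i > guarantee \<pi> c e j)"
proof -
  define L where "L = length \<pi>"
  obtain k where k: "k \<le> L" "count_list (drop k \<pi>) j < count_list (drop k \<pi>) i"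
    using nsc unfolding suffix_cond_def L_def by (auto simp: not_le)
  define p where "p = L - k"
  define c where "c = (\<lambda>x. if x < p then 1 else 0 :: real)"
  have "\<forall>e. sorted_enum c L e \<longrightarrow> guarantee \<pi> c e i > guarantee \<pi> c e j"
  proof (intro allI impI)
    fix e assume se: "sorted_enum c L e"
    have G: "guarantee \<pi> c e a = count_list (drop k \<pi>) a" for a
    proof -
      define S where "S = {r \<in> {1..L}. \<pi> ! (r - 1) = a}"
      have "guarantee \<pi> c e a = sum (\<lambda>r. if k + 1 \<le> r then 1 else 0) S"
        unfolding guarantee_def S_def L_def[symmetric]
      proof (rule sum.cong[OF refl])
        fix r assume r: "r \<in> {r \<in> {1..L}. \<pi> ! (r - 1) = a}"
        have "e (L - r + 1) < p \<longleftrightarrow> L - r + 1 \<le> p"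
          by (rule prefix_claim[OF se[unfolded c_def]]) (use r p_def in auto)
        moreover have "L - r + 1 \<le> p \<longleftrightarrow> k + 1 \<le> r" using r k p_def by auto
        ultimately show "c (e (L - r + 1)) = (if k + 1 \<le> r then 1 else 0)"
          unfolding c_def by auto
      qed
      also have "\<dots> = real (card {r \<in> S. k + 1 \<le> r})"
        by (simp add: sum.inter_filter[symmetric] S_def)
      also have "{r \<in> S. k + 1 \<le> r} = (\<lambda>t. t + k + 1) ` {t. t < length (drop k \<pi>) \<and> drop k \<pi> ! t = a}"
      proof (intro set_eqI iffI)
        fix r assume "r \<in> {r \<in> S. k + 1 \<le> r}"
        then show "r \<in> (\<lambda>t. t + k + 1) ` {t. t < length (drop k \<pi>) \<and> drop k \<pi> ! t = a}"
          unfolding S_def L_def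
          by (auto intro!: image_eqI[where x="r - k - 1"] simp: add.commute)
      next
        fix r assume "r \<in> (\<lambda>t. t + k + 1) ` {t. t < length (drop k \<pi>) \<and> drop k \<pi> ! t = a}"
        then show "r \<in> {r \<in> S. k + 1 \<le> r}"
          unfolding S_def L_def by (auto simp: add.commute)
      qed
      also have "card \<dots> = count_list (drop k \<pi>) a"
        using card_rounds[of "drop k \<pi>" a] by (subst card_image) (auto simp: inj_on_def simp del: length_drop)
      finally show ?thesis .
    qed
    show "guarantee \<pi> c e i > guarantee \<pi> c e j" using G k by simp
  qed
  then show ?thesis unfolding L_def by (intro exI[of _ c]) (auto simp: c_def)
qed

theorem proposition6:
  fixes \<pi> :: "nat list" and n i j :: nat
  assumes "set \<pi> \<subseteq> {0..<n}" and "i < n" and "j < n" and "i \<noteq> j"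
  shows "(suffix_cond \<pi> i j \<longrightarrow>
            (\<forall>c :: nat \<Rightarrow> real. (\<forall>x. 0 \<le> c x) \<longrightarrow>
               (\<forall>ps. greedy_run \<pi> i c ps \<longrightarrow>
                  sum c (final_bundle \<pi> ps i) \<le> sum c (final_bundle \<pi> ps j))))
       \<and> (\<not> suffix_cond \<pi> i j \<longrightarrow>
            (\<exists>c :: nat \<Rightarrow> real. (\<forall>x. 0 \<le> c x) \<and>
               (\<forall>e. sorted_enum c (length \<pi>) e \<longrightarrow>
                  guarantee \<pi> c e i > guarantee \<pi> c e j)))"
  using part1 part2 by blast

end
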